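(* In the quantum switch model of the context (with $W=\infty$), suppose $(\lambda_{ij}+\epsilon)_{i,j\in\mathcal K}\in\Lambda$ for some $\epsilon>0$ and Assumption 1 holds, and let $c_2$ be a constant, independent of $t$, such that $\mathbb E\big[\sum_{\tau=0}^{t-1}A_{ij}(\tau)\mid\overline S(t)\big]\mathbb P[\overline S(t)]\le c_2$ for all $t\ge1$ and all $i,j$, where $S(t)=\{\sum_{i\in\mathcal K}U_{ij}(t)\le E_{0j}(t)\ \forall j\in\mathcal K\}$. Let $L_{\mathrm{od}}(\mathbf u)=\sum_{i,j\in\mathcal K}u_{ij}$ and $\tilde\Delta_1^\pi(t)=\mathbb E[L_{\mathrm{od}}(\mathbf U(t+1))-L_{\mathrm{od}}(\mathbf U(t))]$ with $\mathbf U(t)=(U_{ij}(t))_{i,j}$. Then for any on-demand protocol $\pi$ and any slot $t_0$, $$\tilde\Delta_1^\pi(t_0)\le\sum_{i,j\in\mathcal K}\Big[\lambda_{ij}+qc_2-q\,\mathbb E[U_{ij}(t_0)]\Big].$$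
   Context: Quantum switch model. There are $K$ end nodes $\mathcal K=\{1,\dots,K\}$ and a switch (node $0$); time is slotted, $t=0,1,2,\dots$; pair-indexed quantities are symmetric in $(i,j)$. In slot $t$: (i) $C_{0i}(t)\in\{0,1\}$ EPR pairs are generated between the switch and node $i$, where $\{C_{0i}(t)\}_{t\ge0}$ are mutually independent Bernoulli processes (i.i.d. in $t$) with mean $p_i$. (ii) The switch chooses nonnegative integers $F_{ij}(t)=F_{ji}(t)$ (entanglement swaps for pair $(i,j)$, each consuming one stored switch–$i$ and one stored switch–$j$ pair) with $\sum_iF_{ij}(t)\le E_{0j}(t)$; no limit on swaps per slot ($W=\infty$); each swap succeeds independently with probability $q\in(0,1]$; $R_{ij}(t)$ is the number of successes. (iii) $A_{ij}(t)\in\mathbb N$ new requests for pair $(i,j)$ arrive. Dynamics: $U_{ij}(t+1)=[U_{ij}(t)-E_{ij}(t)-R_{ij}(t)]^++A_{ij}(t)$, $E_{ij}(t+1)=[E_{ij}(t)+R_{ij}(t)-U_{ij}(t)]^+$, $E_{0i}(t+1)=E_{0i}(t)-\sum_jF_{ij}(t)+C_{0i}(t)$, with zero initial values; $U_{ij}$ = pending requests, $E_{ij}$ = stored $i$–$j$ pairs, $E_{0i}$ = stored switch–$i$ pairs; memory unlimited, no decoherence. Requests: $\{A_{ij}(t)\}_t$ mutually independent across pairs, each stationary ergodic with rate $\lambda_{ij}$, and $\mathbb E[A_{ij}(t)^2\mid H(t)=h]\le A_{\max}^2$ for every $t,i,j$ and realization $h$ of the history $H(t)=(E_{ij}(\tau),U_{ij}(\tau),A_{ij}(\tau),R_{ij}(\tau),C_{0i}(\tau))_{\tau=0}^{t-1}$.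 $\Lambda$ is the set of nonnegative matrices $(\lambda_{ij})$ for which there exist nonnegative $f_{ij}=f_{ji}$ with $\sum_if_{ij}\le p_j$ for all $j$ and $\lambda_{ij}\le qf_{ij}$ for all $i,j$. Assumption 1: for every $\epsilon'>0$ there is a constant $c_1(\epsilon')$, independent of $t$, such that for all $t\ge1$ and all $i,j$, $\mathbb E\big[\sum_{\tau=0}^{t-1}A_{ij}(\tau)\,\big|\,B_1\big]\mathbb P[B_1]\le c_1(\epsilon')$, where $B_1$ is the event that $\big|\frac1t\sum_{\tau=0}^{t-1}A_{i'j'}(\tau)-\lambda_{i'j'}\big|>\epsilon'$ for some $i',j'$. On-demand protocols: in every slot $t$ the choices $F_{ij}=F_{ij}(t)$ satisfy $\sum_{i}F_{ij}\le E_{0j}(t)$ for all $j$; $F_{ij}\le U_{ij}(t)$; $F_{ij}=F_{ji}\in\mathbb N$; and $\big(E_{0i}(t)-\sum_kF_{ik}\big)\big(E_{0j}(t)-\sum_kF_{kj}\big)\big(U_{ij}(t)-F_{ij}\big)=0$ for all $i,j$. *)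

theory Defs
  imports "HOL-Probability.Probability"
begin

text \<open>End nodes are 1..K.  Sample paths: a i j t (arrivals), r i j t (swap successes),
  c i t (switch--i generations), f i j t (swap decisions).\<close>

definition Kset :: "nat \<Rightarrow> nat set" where
  "Kset K = {1..K}"

text \<open>Pending requests U and stored end-to-end pairs E (they depend only on a and r).\<close>
primrec UE :: "(nat \<Rightarrow> nat \<Rightarrow> nat \<Rightarrow> nat) \<Rightarrow> (nat \<Rightarrow> nat \<Rightarrow> nat \<Rightarrow> nat) \<Rightarrow> nat
    \<Rightarrow> (nat \<Rightarrow> nat \<Rightarrow> nat) \<times> (nat \<Rightarrow> nat \<Rightarrow> nat)" where
  "UE a r 0 = ((\<lambda>i j. 0), (\<lambda>i j. 0))"
| "UE a r (Suc t) =
     (let u = fst (UE a r t); e = snd (UE a r t) in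
       ((\<lambda>i j. (u i j - e i j - r i j t) + a i j t),
        (\<lambda>i j. (e i j + r i j t) - u i j)))"

text \<open>Stored switch--i pairs E_0i (nat subtraction is exact under the protocol constraints).\<close>
primrec E0st :: "nat \<Rightarrow> (nat \<Rightarrow> nat \<Rightarrow> nat) \<Rightarrow> (nat \<Rightarrow> nat \<Rightarrow> nat \<Rightarrow> nat) \<Rightarrow> nat \<Rightarrow> nat \<Rightarrow> nat" where
  "E0st K c f 0 = (\<lambda>i. 0)"
| "E0st K c f (Suc t) = (\<lambda>i. E0st K c f t i - (\<Sum>j\<in>Kset K. f i j t) + c i t)"

definition Uq :: "(nat \<Rightarrow> nat \<Rightarrow> nat \<Rightarrow> 'a \<Rightarrow> nat) \<Rightarrow> (nat \<Rightarrow> nat \<Rightarrow> nat \<Rightarrow> 'a \<Rightarrow> nat)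
    \<Rightarrow> nat \<Rightarrow> nat \<Rightarrow> nat \<Rightarrow> 'a \<Rightarrow> nat" where
  "Uq A R i j t \<omega> = fst (UE (\<lambda>i j t. A i j t \<omega>) (\<lambda>i j t. R i j t \<omega>) t) i j"

definition Eq :: "(nat \<Rightarrow> nat \<Rightarrow> nat \<Rightarrow> 'a \<Rightarrow> nat) \<Rightarrow> (nat \<Rightarrow> nat \<Rightarrow> nat \<Rightarrow> 'a \<Rightarrow> nat)
    \<Rightarrow> nat \<Rightarrow> nat \<Rightarrow> nat \<Rightarrow> 'a \<Rightarrow> nat" where
  "Eq A R i j t \<omega> = snd (UE (\<lambda>i j t. A i j t \<omega>) (\<lambda>i j t. R i j t \<omega>) t) i j"

definition E0q :: "nat \<Rightarrow> (nat \<Rightarrow> nat \<Rightarrow> 'a \<Rightarrow> nat) \<Rightarrow> (nat \<Rightarrow> nat \<Rightarrow> nat \<Rightarrow> 'a \<Rightarrow> nat)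
    \<Rightarrow> nat \<Rightarrow> nat \<Rightarrow> 'a \<Rightarrow> nat" where
  "E0q K C F i t \<omega> = E0st K (\<lambda>i t. C i t \<omega>) (\<lambda>i j t. F i j t \<omega>) t i"

definition gen_sets :: "'a measure \<Rightarrow> ('a \<Rightarrow> nat) set \<Rightarrow> 'a set set" where
  "gen_sets M V = sigma_sets (space M) {{\<omega> \<in> space M. X \<omega> = n} | X n. X \<in> V}"

definition hist_vars :: "nat \<Rightarrow> (nat \<Rightarrow> nat \<Rightarrow> nat \<Rightarrow> 'a \<Rightarrow> nat) \<Rightarrow> (nat \<Rightarrow> nat \<Rightarrow> nat \<Rightarrow> 'a \<Rightarrow> nat)
    \<Rightarrow> (nat \<Rightarrow> nat \<Rightarrow> 'a \<Rightarrow> nat) \<Rightarrow> nat \<Rightarrow> ('a \<Rightarrow> nat) set" where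
  "hist_vars K A R C t =
     {X. \<exists>i\<in>Kset K. \<exists>j\<in>Kset K. \<exists>\<tau><t.
          X = Eq A R i j \<tau> \<or> X = Uq A R i j \<tau> \<or> X = A i j \<tau> \<or> X = R i j \<tau> \<or> X = C i \<tau>}"

definition hist_sets where
  "hist_sets M K A R C t = gen_sets M (hist_vars K A R C t)"

text \<open>History together with the swap decisions of slot t (what swap outcomes are conditioned on).\<close>
definition hist_dec_sets where
  "hist_dec_sets M K A R C F t =
     gen_sets M (hist_vars K A R C t \<union> {F i j t | i j. i \<in> Kset K \<and> j \<in> Kset K})"

definition Pairs :: "nat \<Rightarrow> (nat \<times> nat) set" where
  "Pairs K = {(i, j). 1 \<le> i \<and> i \<le> j \<and> j \<le> K}"

abbreviation seqM :: "(nat \<Rightarrow> nat) measure" where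
  "seqM \<equiv> Pi\<^sub>M UNIV (\<lambda>_. count_space UNIV)"

definition generation_ok :: "'a measure \<Rightarrow> nat \<Rightarrow> (nat \<Rightarrow> real) \<Rightarrow> (nat \<Rightarrow> nat \<Rightarrow> 'a \<Rightarrow> nat) \<Rightarrow> bool" where
  "generation_ok M K p C \<longleftrightarrow>
     (\<forall>i\<in>Kset K. 0 \<le> p i \<and> p i \<le> 1) \<and>
     (\<forall>i\<in>Kset K. \<forall>t. C i t \<in> M \<rightarrow>\<^sub>M count_space UNIV \<and> (\<forall>\<omega>\<in>space M. C i t \<omega> \<le> 1) \<and>
         distr M (count_space UNIV) (C i t) =
           measure_pmf (map_pmf (\<lambda>b. if b then 1 else 0) (bernoulli_pmf (p i)))) \<and>
     prob_space.indep_vars M (\<lambda>_. count_space UNIV) (\<lambda>(i, t). C i t) (Kset K \<times> UNIV)"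

text \<open>Requests: symmetric in (i,j); the processes of distinct pairs are mutually independent;
  each is stationary ergodic with rate lam i j; conditional second moments bounded by Amax^2
  given the history (stated as: for every history event B, E[A^2; B] \<le> Amax^2 P(B)).\<close>
definition stationary_ergodic :: "'a measure \<Rightarrow> (nat \<Rightarrow> 'a \<Rightarrow> nat) \<Rightarrow> bool" where
  "stationary_ergodic M X \<longleftrightarrow>
     (\<forall>t. X t \<in> M \<rightarrow>\<^sub>M count_space UNIV) \<and>
     (\<forall>s. distr M seqM (\<lambda>\<omega> t. X (t + s) \<omega>) = distr M seqM (\<lambda>\<omega> t. X t \<omega>)) \<and>
     (\<forall>S \<in> sets seqM. (\<lambda>x t. x (Suc t)) -` S \<inter> space seqM = S \<longrightarrow>
        measure M {\<omega> \<in> space M. (\<lambda>t. X t \<omega>) \<in> S} = 0 \<or>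
        measure M {\<omega> \<in> space M. (\<lambda>t. X t \<omega>) \<in> S} = 1)"

definition arrivals_ok :: "'a measure \<Rightarrow> nat \<Rightarrow> (nat \<Rightarrow> nat \<Rightarrow> real) \<Rightarrow> real
    \<Rightarrow> (nat \<Rightarrow> nat \<Rightarrow> nat \<Rightarrow> 'a \<Rightarrow> nat) \<Rightarrow> (nat \<Rightarrow> nat \<Rightarrow> nat \<Rightarrow> 'a \<Rightarrow> nat)
    \<Rightarrow> (nat \<Rightarrow> nat \<Rightarrow> 'a \<Rightarrow> nat) \<Rightarrow> bool" where
  "arrivals_ok M K lam Amax A R C \<longleftrightarrow>
     (\<forall>i\<in>Kset K. \<forall>j\<in>Kset K. \<forall>t. A i j t = A j i t) \<and>
     (\<forall>i\<in>Kset K. \<forall>j\<in>Kset K. stationary_ergodic M (A i j) \<and>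
        lam i j = integral\<^sup>L M (\<lambda>\<omega>. real (A i j 0 \<omega>))) \<and>
     prob_space.indep_vars M (\<lambda>_. seqM) (\<lambda>(i, j) \<omega> t. A i j t \<omega>) (Pairs K) \<and>
     (\<forall>t. \<forall>i\<in>Kset K. \<forall>j\<in>Kset K. \<forall>B \<in> hist_sets M K A R C t.
        (\<integral>\<^sup>+ \<omega>\<in>B. ennreal ((real (A i j t \<omega>))\<^sup>2) \<partial>M) \<le> ennreal (Amax\<^sup>2) * emeasure M B)"

text \<open>Swaps: decisions are random variables, symmetric; given the history and the decisions of
  slot t, the success counts of the pairs are independent Binomial(F_ij(t), q).\<close>
definition swaps_ok :: "'a measure \<Rightarrow> nat \<Rightarrow> real
    \<Rightarrow> (nat \<Rightarrow> nat \<Rightarrow> nat \<Rightarrow> 'a \<Rightarrow> nat) \<Rightarrow> (nat \<Rightarrow> nat \<Rightarrow> nat \<Rightarrow> 'a \<Rightarrow> nat)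
    \<Rightarrow> (nat \<Rightarrow> nat \<Rightarrow> 'a \<Rightarrow> nat) \<Rightarrow> (nat \<Rightarrow> nat \<Rightarrow> nat \<Rightarrow> 'a \<Rightarrow> nat) \<Rightarrow> bool" where
  "swaps_ok M K q A R C F \<longleftrightarrow>
     (\<forall>i\<in>Kset K. \<forall>j\<in>Kset K. \<forall>t.
        F i j t \<in> M \<rightarrow>\<^sub>M count_space UNIV \<and> R i j t \<in> M \<rightarrow>\<^sub>M count_space UNIV \<and>
        R i j t = R j i t) \<and>
     (\<forall>t. \<forall>B \<in> hist_dec_sets M K A R C F t. \<forall>k :: nat \<Rightarrow> nat \<Rightarrow> nat.
        emeasure M (B \<inter> {\<omega> \<in> space M. \<forall>(i, j)\<in>Pairs K. R i j t \<omega> = k i j}) =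
        (\<integral>\<^sup>+ \<omega>\<in>B. (\<Prod>(i, j)\<in>Pairs K. ennreal (pmf (binomial_pmf (F i j t \<omega>) q) (k i j))) \<partial>M))"

definition on_demand :: "'a measure \<Rightarrow> nat \<Rightarrow> (nat \<Rightarrow> nat \<Rightarrow> nat \<Rightarrow> 'a \<Rightarrow> nat)
    \<Rightarrow> (nat \<Rightarrow> nat \<Rightarrow> nat \<Rightarrow> 'a \<Rightarrow> nat) \<Rightarrow> (nat \<Rightarrow> nat \<Rightarrow> 'a \<Rightarrow> nat)
    \<Rightarrow> (nat \<Rightarrow> nat \<Rightarrow> nat \<Rightarrow> 'a \<Rightarrow> nat) \<Rightarrow> bool" where
  "on_demand M K A R C F \<longleftrightarrow>
     (\<forall>t. \<forall>\<omega>\<in>space M.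
        (\<forall>j\<in>Kset K. (\<Sum>i\<in>Kset K. F i j t \<omega>) \<le> E0q K C F j t \<omega>) \<and>
        (\<forall>i\<in>Kset K. \<forall>j\<in>Kset K.
           F i j t \<omega> \<le> Uq A R i j t \<omega> \<and> F i j t \<omega> = F j i t \<omega> \<and>
           (int (E0q K C F i t \<omega>) - (\<Sum>k\<in>Kset K. int (F i k t \<omega>))) *
           (int (E0q K C F j t \<omega>) - (\<Sum>k\<in>Kset K. int (F k j t \<omega>))) *
           (int (Uq A R i j t \<omega>) - int (F i j t \<omega>)) = 0))"

definition capacity_region :: "nat \<Rightarrow> (nat \<Rightarrow> real) \<Rightarrow> real \<Rightarrow> (nat \<Rightarrow> nat \<Rightarrow> real) \<Rightarrow> bool" where
  "capacity_region K p q lam \<longleftrightarrow>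
     (\<forall>i\<in>Kset K. \<forall>j\<in>Kset K. 0 \<le> lam i j) \<and>
     (\<exists>f :: nat \<Rightarrow> nat \<Rightarrow> real.
        (\<forall>i\<in>Kset K. \<forall>j\<in>Kset K. 0 \<le> f i j \<and> f i j = f j i \<and> lam i j \<le> q * f i j) \<and>
        (\<forall>j\<in>Kset K. (\<Sum>i\<in>Kset K. f i j) \<le> p j))"

definition assumption1 :: "'a measure \<Rightarrow> nat \<Rightarrow> (nat \<Rightarrow> nat \<Rightarrow> real)
    \<Rightarrow> (nat \<Rightarrow> nat \<Rightarrow> nat \<Rightarrow> 'a \<Rightarrow> nat) \<Rightarrow> bool" where
  "assumption1 M K lam A \<longleftrightarrow>
     (\<forall>\<epsilon>'>0. \<exists>c1::real. \<forall>t\<ge>1. \<forall>i\<in>Kset K. \<forall>j\<in>Kset K.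
        integral\<^sup>L M (\<lambda>\<omega>. (\<Sum>\<tau><t. real (A i j \<tau> \<omega>)) *
          indicator {\<omega> \<in> space M. \<exists>i'\<in>Kset K. \<exists>j'\<in>Kset K.
              \<bar>(\<Sum>\<tau><t. real (A i' j' \<tau> \<omega>)) / real t - lam i' j'\<bar> > \<epsilon>'} \<omega>) \<le> c1)"

definition S_event :: "'a measure \<Rightarrow> nat \<Rightarrow> (nat \<Rightarrow> nat \<Rightarrow> nat \<Rightarrow> 'a \<Rightarrow> nat)
    \<Rightarrow> (nat \<Rightarrow> nat \<Rightarrow> nat \<Rightarrow> 'a \<Rightarrow> nat) \<Rightarrow> (nat \<Rightarrow> nat \<Rightarrow> 'a \<Rightarrow> nat)
    \<Rightarrow> (nat \<Rightarrow> nat \<Rightarrow> nat \<Rightarrow> 'a \<Rightarrow> nat) \<Rightarrow> nat \<Rightarrow> 'a set" where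
  "S_event M K A R C F t =
     {\<omega> \<in> space M. \<forall>j\<in>Kset K. (\<Sum>i\<in>Kset K. Uq A R i j t \<omega>) \<le> E0q K C F j t \<omega>}"

definition L_od :: "nat \<Rightarrow> (nat \<Rightarrow> nat \<Rightarrow> nat) \<Rightarrow> real" where
  "L_od K u = (\<Sum>i\<in>Kset K. \<Sum>j\<in>Kset K. real (u i j))"

definition drift1 :: "'a measure \<Rightarrow> nat \<Rightarrow> (nat \<Rightarrow> nat \<Rightarrow> nat \<Rightarrow> 'a \<Rightarrow> nat)
    \<Rightarrow> (nat \<Rightarrow> nat \<Rightarrow> nat \<Rightarrow> 'a \<Rightarrow> nat) \<Rightarrow> nat \<Rightarrow> real" where
  "drift1 M K A R t = integral\<^sup>L M (\<lambda>\<omega>.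
      L_od K (\<lambda>i j. Uq A R i j (Suc t) \<omega>) - L_od K (\<lambda>i j. Uq A R i j t \<omega>))"

end

theory Submission
  imports Defs
begin

lemma Uq_Suc: "Uq A R i j (Suc t) \<omega> = (Uq A R i j t \<omega> - Eq A R i j t \<omega> - R i j t \<omega>) + A i j t \<omega>"
  by (simp add: Uq_def Eq_def Let_def)
lemma Eq_Suc: "Eq A R i j (Suc t) \<omega> = (Eq A R i j t \<omega> + R i j t \<omega>) - Uq A R i j t \<omega>"
  by (simp add: Uq_def Eq_def Let_def)
lemma Uq_0[simp]: "Uq A R i j 0 \<omega> = 0" by (simp add: Uq_def)
lemma Eq_0[simp]: "Eq A R i j 0 \<omega> = 0" by (simp add: Eq_def)
lemma E0q_Suc: "E0q K C F i (Suc t) \<omega> = E0q K C F i t \<omega> - (\<Sum>j\<in>Kset K. F i j t \<omega>) + C i t \<omega>"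
  by (simp add: E0q_def)
lemma E0q_0[simp]: "E0q K C F i 0 \<omega> = 0" by (simp add: E0q_def)

lemma Uq_le_sum: "Uq A R i j t \<omega> \<le> (\<Sum>\<tau><t. A i j \<tau> \<omega>)"
  by (induction t) (auto simp: Uq_Suc)

lemma UE_sym:
  assumes "\<And>\<tau>. A i j \<tau> \<omega> = A j i \<tau> \<omega>" "\<And>\<tau>. R i j \<tau> \<omega> = R j i \<tau> \<omega>"
  shows "Uq A R i j t \<omega> = Uq A R j i t \<omega> \<and> Eq A R i j t \<omega> = Eq A R j i t \<omega>"
  by (induction t) (auto simp: Uq_Suc Eq_Suc assms)

lemma meas2:
  fixes f :: "'a \<Rightarrow> 'b::countable" and g :: "'a \<Rightarrow> 'c::countable"
  assumes "f \<in> M \<rightarrow>\<^sub>M count_space UNIV" "g \<in> M \<rightarrow>\<^sub>M count_space UNIV"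
  shows "(\<lambda>\<omega>. h (f \<omega>) (g \<omega>)) \<in> M \<rightarrow>\<^sub>M count_space UNIV"
proof -
  have "(\<lambda>\<omega>. h x (g \<omega>)) \<in> M \<rightarrow>\<^sub>M count_space UNIV" for x
    by (rule measurable_compose[OF assms(2)]) simp
  then show ?thesis
    by (rule measurable_compose_countable[OF _ assms(1)])
qed

lemma meas_sum:
  assumes "finite I" "\<And>i. i \<in> I \<Longrightarrow> (f i :: 'a \<Rightarrow> nat) \<in> M \<rightarrow>\<^sub>M count_space UNIV"
  shows "(\<lambda>\<omega>. \<Sum>i\<in>I. f i \<omega>) \<in> M \<rightarrow>\<^sub>M count_space UNIV"
  using assms proof (induction I rule: finite_induct)
  case (insert x F) then show ?case by (simp add: meas2)
qed simp

lemma meas_real: "(f :: 'a \<Rightarrow> nat) \<in> M \<rightarrow>\<^sub>M count_space UNIV \<Longrightarrow> (\<lambda>\<omega>. real (f \<omega>)) \<in> borel_measurable M"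
  by (rule measurable_compose[of f M "count_space UNIV"]) simp_all

lemma meas_Uq:
  assumes "\<And>t. A i j t \<in> M \<rightarrow>\<^sub>M count_space UNIV" "\<And>t. R i j t \<in> M \<rightarrow>\<^sub>M count_space UNIV"
  shows "Uq A R i j t \<in> M \<rightarrow>\<^sub>M count_space UNIV \<and> Eq A R i j t \<in> M \<rightarrow>\<^sub>M count_space UNIV"
proof (induction t)
  case 0 then show ?case by (simp add: Uq_def Eq_def)
next
  case (Suc t)
  have u: "Uq A R i j (Suc t) = (\<lambda>\<omega>. (Uq A R i j t \<omega> - Eq A R i j t \<omega> - R i j t \<omega>) + A i j t \<omega>)"
    by (rule ext) (simp add: Uq_Suc)
  have e: "Eq A R i j (Suc t) = (\<lambda>\<omega>. (Eq A R i j t \<omega> + R i j t \<omega>) - Uq A R i j t \<omega>)"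
    by (rule ext) (simp add: Eq_Suc)
  have m1: "(\<lambda>\<omega>. Uq A R i j t \<omega> - Eq A R i j t \<omega>) \<in> M \<rightarrow>\<^sub>M count_space UNIV"
    by (rule meas2[OF conjunct1[OF Suc] conjunct2[OF Suc]])
  have m2: "(\<lambda>\<omega>. Uq A R i j t \<omega> - Eq A R i j t \<omega> - R i j t \<omega>) \<in> M \<rightarrow>\<^sub>M count_space UNIV"
    by (rule meas2[OF m1 assms(2)])
  have m3: "(\<lambda>\<omega>. Eq A R i j t \<omega> + R i j t \<omega>) \<in> M \<rightarrow>\<^sub>M count_space UNIV"
    by (rule meas2[OF conjunct2[OF Suc] assms(2)])
  show ?case unfolding u e
    using meas2[OF m2 assms(1)] meas2[OF m3 conjunct1[OF Suc]] by blast
qed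

lemma meas_E0q:
  assumes "\<And>t. C i t \<in> M \<rightarrow>\<^sub>M count_space UNIV" "\<And>j t. j \<in> Kset K \<Longrightarrow> F i j t \<in> M \<rightarrow>\<^sub>M count_space UNIV"
  shows "E0q K C F i t \<in> M \<rightarrow>\<^sub>M count_space UNIV"
proof (induction t)
  case 0 then show ?case by (simp add: E0q_def)
next
  case (Suc t)
  have u: "E0q K C F i (Suc t) = (\<lambda>\<omega>. E0q K C F i t \<omega> - (\<Sum>j\<in>Kset K. F i j t \<omega>) + C i t \<omega>)"
    by (rule ext) (simp add: E0q_Suc)
  have s: "(\<lambda>\<omega>. \<Sum>j\<in>Kset K. F i j t \<omega>) \<in> M \<rightarrow>\<^sub>M count_space UNIV"
    by (rule meas_sum) (auto simp: Kset_def assms(2))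
  show ?case unfolding u by (rule meas2[OF meas2[OF Suc s] assms(1)])
qed

lemma finite_Pairs: "finite (Pairs K)"
proof -
  have "Pairs K \<subseteq> {1..K} \<times> {1..K}" by (auto simp: Pairs_def)
  then show ?thesis by (rule finite_subset) simp
qed

lemma Pairs_Kset: "(i, j) \<in> Pairs K \<Longrightarrow> i \<in> Kset K \<and> j \<in> Kset K"
  by (auto simp: Pairs_def Kset_def)

lemma marginal:
  assumes sw: "swaps_ok M K q A R C F"
    and ab: "(a, b) \<in> Pairs K"
    and B: "B \<in> hist_dec_sets M K A R C F t" "B \<in> sets M"
  shows "emeasure M (B \<inter> {\<omega> \<in> space M. R a b t \<omega> = m}) =
         (\<integral>\<^sup>+ \<omega>. ennreal (pmf (binomial_pmf (F a b t \<omega>) q) m) * indicator B \<omega> \<partial>M)"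
proof -
  define P where "P = Pairs K"
  have finP: "finite P" by (simp add: P_def finite_Pairs)
  have measR: "\<And>i j. (i, j) \<in> P \<Longrightarrow> R i j t \<in> M \<rightarrow>\<^sub>M count_space UNIV"
    and measF: "\<And>i j. (i, j) \<in> P \<Longrightarrow> F i j t \<in> M \<rightarrow>\<^sub>M count_space UNIV"
    using sw Pairs_Kset unfolding swaps_ok_def P_def by blast+
  define G where "G = {g :: nat \<times> nat \<Rightarrow> nat. (\<forall>x. x \<notin> P \<longrightarrow> g x = 0) \<and> g (a, b) = m}"
  define X where "X g = B \<inter> {\<omega> \<in> space M. \<forall>(i, j)\<in>P. R i j t \<omega> = curry g i j}" for g
  have cG: "countable G"
  proof -
    have "G \<subseteq> (\<lambda>h x. if x \<in> P then h x else 0) ` PiE P (\<lambda>_. UNIV :: nat set)"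
      by (subst dflt_image_PiE) (auto simp: G_def PiE_dflt_def)
    moreover have "countable (PiE P (\<lambda>_. UNIV :: nat set))"
      by (rule countable_PiE) (auto simp: finP)
    ultimately show ?thesis by (meson countable_image countable_subset)
  qed
  have Xs: "X g \<in> sets M" for g
  proof -
    have "{\<omega> \<in> space M. \<forall>(i, j)\<in>P. R i j t \<omega> = curry g i j} =
          space M \<inter> (\<Inter>x\<in>P. {\<omega> \<in> space M. R (fst x) (snd x) t \<omega> = g x})"
      by (auto; metis fst_conv snd_conv)
    moreover have "{\<omega> \<in> space M. R (fst x) (snd x) t \<omega> = g x} \<in> sets M" if "x \<in> P" for x
    proof -
      have "R (fst x) (snd x) t \<in> M \<rightarrow>\<^sub>M count_space UNIV" using measR[of "fst x" "snd x"] that by simp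
      then have "R (fst x) (snd x) t -` {g x} \<inter> space M \<in> sets M"
        by (rule measurable_sets) simp
      then show ?thesis by (simp add: vimage_def Int_def conj_commute)
    qed
    ultimately show ?thesis unfolding X_def using B(2) finP
      by (auto intro!: sets.Int sets.finite_INT)
  qed
  have UX: "B \<inter> {\<omega> \<in> space M. R a b t \<omega> = m} = \<Union>(X ` G)"
  proof (intro equalityI subsetI)
    fix \<omega> assume w: "\<omega> \<in> B \<inter> {\<omega> \<in> space M. R a b t \<omega> = m}"
    define g where "g x = (if x \<in> P then R (fst x) (snd x) t \<omega> else 0)" for x
    have "g \<in> G" using w ab by (auto simp: g_def G_def P_def)
    moreover have "\<omega> \<in> X g" using w by (auto simp: X_def g_def)
    ultimately show "\<omega> \<in> \<Union>(X ` G)" by blast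
  next
    fix \<omega> assume "\<omega> \<in> \<Union>(X ` G)"
    then obtain g where "g \<in> G" "\<omega> \<in> X g" by blast
    then show "\<omega> \<in> B \<inter> {\<omega> \<in> space M. R a b t \<omega> = m}"
      using ab by (auto simp: X_def G_def P_def)
  qed
  have disj: "disjoint_family_on X G"
    unfolding disjoint_family_on_def
  proof (intro ballI impI)
    fix g g' assume g: "g \<in> G" "g' \<in> G" "g \<noteq> g'"
    show "X g \<inter> X g' = {}"
    proof (rule ccontr)
      assume "X g \<inter> X g' \<noteq> {}"
      then obtain \<omega> where "\<omega> \<in> X g" "\<omega> \<in> X g'" by blast
      then have "\<forall>x\<in>P. g x = g' x"
      proof (intro ballI)
        fix x assume x: "x \<in> P"
        assume w: "\<omega> \<in> X g" "\<omega> \<in> X g'"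
        have "R (fst x) (snd x) t \<omega> = g x" using w(1) x by (auto simp: X_def case_prod_beta)
        moreover have "R (fst x) (snd x) t \<omega> = g' x" using w(2) x by (auto simp: X_def case_prod_beta)
        ultimately show "g x = g' x" by simp
      qed
      moreover have "\<forall>x. x \<notin> P \<longrightarrow> g x = g' x" using g by (auto simp: G_def)
      ultimately have "g = g'" by (metis ext)
      with g show False by simp
    qed
  qed
  define D where "D \<omega> = Pi_pmf P 0 (\<lambda>x. binomial_pmf (F (fst x) (snd x) t \<omega>) q)" for \<omega>
  have Xe: "emeasure M (X g) = (\<integral>\<^sup>+ \<omega>. ennreal (pmf (D \<omega>) g) * indicator B \<omega> \<partial>M)" if "g \<in> G" for g
  proof -
    have "emeasure M (X g) = (\<integral>\<^sup>+ \<omega>\<in>B. (\<Prod>(i, j)\<in>Pairs K. ennreal (pmf (binomial_pmf (F i j t \<omega>) q) (curry g i j))) \<partial>M)"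
      using sw B(1) unfolding swaps_ok_def X_def P_def by blast
    also have "\<dots> = (\<integral>\<^sup>+ \<omega>. ennreal (pmf (D \<omega>) g) * indicator B \<omega> \<partial>M)"
    proof (intro nn_integral_cong arg_cong2[where f = "(*)"] refl)
      fix \<omega>
      have "(\<Prod>(i, j)\<in>Pairs K. ennreal (pmf (binomial_pmf (F i j t \<omega>) q) (curry g i j))) =
            (\<Prod>x\<in>P. ennreal (pmf (binomial_pmf (F (fst x) (snd x) t \<omega>) q) (g x)))"
        by (simp add: P_def case_prod_beta)
      also have "\<dots> = ennreal (\<Prod>x\<in>P. pmf (binomial_pmf (F (fst x) (snd x) t \<omega>) q) (g x))"
        by (rule prod_ennreal) simp
      also have "\<dots> = ennreal (pmf (D \<omega>) g)"
      proof -
        have gz: "\<And>x. x \<notin> P \<Longrightarrow> g x = 0" using that by (auto simp: G_def)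
        show ?thesis by (simp add: D_def pmf_Pi'[OF finP gz])
      qed
      finally show "(\<Prod>(i, j)\<in>Pairs K. ennreal (pmf (binomial_pmf (F i j t \<omega>) q) (curry g i j))) =
            ennreal (pmf (D \<omega>) g)" .
    qed
    finally show ?thesis .
  qed
  have measD: "(\<lambda>\<omega>. ennreal (pmf (D \<omega>) g) * indicator B \<omega>) \<in> borel_measurable M" for g
  proof -
    have "(\<lambda>\<omega>. ennreal (pmf (D \<omega>) g)) \<in> borel_measurable M"
    proof (cases "\<forall>x. x \<notin> P \<longrightarrow> g x = 0")
      case True
      have eq: "(\<lambda>\<omega>. ennreal (pmf (D \<omega>) g)) = (\<lambda>\<omega>. \<Prod>x\<in>P. ennreal (pmf (binomial_pmf (F (fst x) (snd x) t \<omega>) q) (g x)))"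
      proof -
        have gz: "\<And>x. x \<notin> P \<Longrightarrow> g x = 0" using True by auto
        show ?thesis by (simp add: D_def pmf_Pi'[OF finP gz] prod_ennreal)
      qed
      have "(\<lambda>\<omega>. ennreal (pmf (binomial_pmf (F (fst x) (snd x) t \<omega>) q) (g x))) \<in> borel_measurable M"
        if "x \<in> P" for x
        by (rule measurable_compose[OF measF[of "fst x" "snd x"]]) (use that in auto)
      then show ?thesis unfolding eq by (intro borel_measurable_prod_ennreal) auto
    next
      case False
      then have "\<exists>x. x \<notin> P \<and> g x \<noteq> 0" by auto
      then show ?thesis by (simp add: D_def pmf_Pi_outside[OF finP])
    qed
    then show ?thesis using B(2) by measurable
  qed
  have "emeasure M (B \<inter> {\<omega> \<in> space M. R a b t \<omega> = m}) = (\<integral>\<^sup>+ g. emeasure M (X g) \<partial>count_space G)"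
    unfolding UX by (rule emeasure_UN_countable[OF Xs cG disj])
  also have "\<dots> = (\<integral>\<^sup>+ g. (\<integral>\<^sup>+ \<omega>. ennreal (pmf (D \<omega>) g) * indicator B \<omega> \<partial>M) \<partial>count_space G)"
    by (intro nn_integral_cong) (simp add: Xe)
  also have "\<dots> = (\<integral>\<^sup>+ \<omega>. (\<integral>\<^sup>+ g. ennreal (pmf (D \<omega>) g) * indicator B \<omega> \<partial>count_space G) \<partial>M)"
    by (rule nn_integral_count_space_nn_integral[symmetric, OF cG measD])
  also have "\<dots> = (\<integral>\<^sup>+ \<omega>. ennreal (pmf (binomial_pmf (F a b t \<omega>) q) m) * indicator B \<omega> \<partial>M)"
  proof (intro nn_integral_cong)
    fix \<omega>
    have "(\<integral>\<^sup>+ g. ennreal (pmf (D \<omega>) g) * indicator B \<omega> \<partial>count_space G) =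
          (\<integral>\<^sup>+ g. ennreal (pmf (D \<omega>) g) \<partial>count_space G) * indicator B \<omega>"
      by (rule nn_integral_multc) simp
    also have "(\<integral>\<^sup>+ g. ennreal (pmf (D \<omega>) g) \<partial>count_space G) = emeasure (measure_pmf (D \<omega>)) G"
      by (rule nn_integral_pmf)
    also have "\<dots> = emeasure (measure_pmf (D \<omega>)) {g. g (a, b) = m}"
    proof -
      have "G \<inter> set_pmf (D \<omega>) = {g. g (a, b) = m} \<inter> set_pmf (D \<omega>)"
        using set_Pi_pmf_subset[OF finP, of 0 "\<lambda>x. binomial_pmf (F (fst x) (snd x) t \<omega>) q"]
        by (auto simp: G_def D_def)
      then show ?thesis by (metis emeasure_Int_set_pmf)
    qed
    also have "\<dots> = emeasure (measure_pmf (map_pmf (\<lambda>g. g (a, b)) (D \<omega>))) {m}"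
      by (simp add: vimage_def)
    also have "map_pmf (\<lambda>g. g (a, b)) (D \<omega>) = binomial_pmf (F a b t \<omega>) q"
      using ab finP by (simp add: D_def Pi_pmf_component P_def)
    also have "emeasure (measure_pmf (binomial_pmf (F a b t \<omega>) q)) {m} = ennreal (pmf (binomial_pmf (F a b t \<omega>) q) m)"
      by (simp add: emeasure_pmf_single)
    finally show "(\<integral>\<^sup>+ g. ennreal (pmf (D \<omega>) g) * indicator B \<omega> \<partial>count_space G) =
       ennreal (pmf (binomial_pmf (F a b t \<omega>) q) m) * indicator B \<omega>" .
  qed
  finally show ?thesis .
qed

lemma binom_mean:
  assumes q: "0 \<le> q" "q \<le> 1"
  shows "(\<integral>\<^sup>+k. ennreal (real k) \<partial>measure_pmf (binomial_pmf n q)) = ennreal (real n * q)"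
proof (induction n)
  case 0
  then show ?case using q by (simp add: binomial_pmf_0)
next
  case (Suc n)
  have "(\<integral>\<^sup>+k. ennreal (real k) \<partial>measure_pmf (binomial_pmf (Suc n) q)) =
        (\<integral>\<^sup>+b. (\<integral>\<^sup>+k. ennreal (real ((if b then 1 else 0) + k)) \<partial>measure_pmf (binomial_pmf n q)) \<partial>measure_pmf (bernoulli_pmf q))"
    using q by (simp add: binomial_pmf_Suc)
  also have "\<dots> = (\<integral>\<^sup>+b. ennreal (if b then 1 else 0) + ennreal (real n * q) \<partial>measure_pmf (bernoulli_pmf q))"
  proof (intro nn_integral_cong)
    fix b :: bool
    have "(\<integral>\<^sup>+k. ennreal (real ((if b then 1 else 0) + k)) \<partial>measure_pmf (binomial_pmf n q)) =
          (\<integral>\<^sup>+k. ennreal (if b then 1 else 0) + ennreal (real k) \<partial>measure_pmf (binomial_pmf n q))"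
      by (intro nn_integral_cong) (simp add: ennreal_plus[symmetric] del: ennreal_plus)
    also have "\<dots> = ennreal (if b then 1 else 0) + ennreal (real n * q)"
      by (subst nn_integral_add) (simp_all add: Suc measure_pmf.emeasure_space_1)
    finally show "(\<integral>\<^sup>+k. ennreal (real ((if b then 1 else 0) + k)) \<partial>measure_pmf (binomial_pmf n q)) =
          ennreal (if b then 1 else 0) + ennreal (real n * q)" .
  qed
  also have "\<dots> = ennreal (q + real n * q)"
  proof -
    have h: "q * (q * real n) \<le> q * real n" using q by (intro mult_left_le_one_le) auto
    have h2: "0 \<le> q * (q * real n)" using q by simp
    define x where "x = q * real n"
    have x0: "0 \<le> x" using q by (simp add: x_def)
    have e1: "ennreal q * ennreal x = ennreal (q * x)" by (rule ennreal_mult[symmetric]) (use q x0 in auto)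
    have e2: "ennreal (1 - q) * ennreal x = ennreal ((1 - q) * x)" by (rule ennreal_mult[symmetric]) (use q x0 in auto)
    have e3: "ennreal (q * x) + ennreal ((1 - q) * x) = ennreal (q * x + (1 - q) * x)"
      by (rule ennreal_plus[symmetric]) (use q x0 in auto)
    have e4: "ennreal q + ennreal x = ennreal (q + x)" by (rule ennreal_plus[symmetric]) (use q x0 in auto)
    have e5: "q * x + (1 - q) * x = x" by (simp add: algebra_simps)
    have "(\<integral>\<^sup>+b. ennreal (if b then 1 else 0) + ennreal x \<partial>measure_pmf (bernoulli_pmf q)) =
          (ennreal 1 + ennreal x) * ennreal q + (ennreal 0 + ennreal x) * ennreal (1 - q)"
      using q by (subst nn_integral_bernoulli_pmf) auto
    also have "\<dots> = ennreal q + (ennreal q * ennreal x + ennreal (1 - q) * ennreal x)"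
      by (simp add: algebra_simps)
    also have "\<dots> = ennreal (q + x)" by (simp only: e1 e2 e3 e4 e5)
    finally show ?thesis by (simp add: x_def mult.commute)
  qed
  also have "q + real n * q = real (Suc n) * q" by (simp add: field_simps)
  finally show ?case .
qed

lemma in_hdsets:
  assumes "a \<in> Kset K" "b \<in> Kset K"
  shows "{\<omega> \<in> space M. F a b t \<omega> = n} \<in> hist_dec_sets M K A R C F t"
  unfolding hist_dec_sets_def gen_sets_def
  by (rule sigma_sets.Basic) (use assms in blast)

lemma R_le_F_AE:
  assumes sw: "swaps_ok M K q A R C F" and ab: "(a, b) \<in> Pairs K" and q: "0 \<le> q" "q \<le> 1"
  shows "AE \<omega> in M. R a b t \<omega> \<le> F a b t \<omega>"
proof -
  have abK: "a \<in> Kset K" "b \<in> Kset K" using Pairs_Kset[OF ab] by auto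
  have mF: "F a b t \<in> M \<rightarrow>\<^sub>M count_space UNIV" and mR: "R a b t \<in> M \<rightarrow>\<^sub>M count_space UNIV"
    using sw abK unfolding swaps_ok_def by blast+
  define B where "B m = {\<omega> \<in> space M. F a b t \<omega> < m}" for m
  have Bh: "B m \<in> hist_dec_sets M K A R C F t" for m
  proof -
    have "B m = (\<Union>n. if n < m then {\<omega> \<in> space M. F a b t \<omega> = n} else {})"
      by (auto simp: B_def split: if_splits)
    also have "\<dots> \<in> hist_dec_sets M K A R C F t"
      unfolding hist_dec_sets_def gen_sets_def
      apply (rule sigma_sets.Union)
      using in_hdsets[OF abK, of M F t _ A R C] unfolding hist_dec_sets_def gen_sets_def
      by (auto intro: sigma_sets.Empty)
    finally show ?thesis .
  qed
  have Bs: "B m \<in> sets M" for m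
  proof -
    have "B m = (\<lambda>\<omega>. if F a b t \<omega> < m then (1::nat) else 0) -` {1} \<inter> space M"
      by (auto simp: B_def split: if_splits)
    also have "\<dots> \<in> sets M"
      by (rule measurable_sets[OF measurable_compose[OF mF, of _ "count_space UNIV"]]) simp_all
    finally show ?thesis .
  qed
  have N: "B m \<inter> {\<omega> \<in> space M. R a b t \<omega> = m} \<in> null_sets M" for m
  proof -
    have "{\<omega> \<in> space M. R a b t \<omega> = m} = R a b t -` {m} \<inter> space M" by auto
    also have "\<dots> \<in> sets M" by (rule measurable_sets[OF mR]) simp
    finally have s: "B m \<inter> {\<omega> \<in> space M. R a b t \<omega> = m} \<in> sets M" using Bs by blast
    have "emeasure M (B m \<inter> {\<omega> \<in> space M. R a b t \<omega> = m}) =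
        (\<integral>\<^sup>+ \<omega>. ennreal (pmf (binomial_pmf (F a b t \<omega>) q) m) * indicator (B m) \<omega> \<partial>M)"
      by (rule marginal[OF sw ab Bh Bs])
    also have "\<dots> = (\<integral>\<^sup>+ \<omega>. 0 \<partial>M)"
      using q by (intro nn_integral_cong) (auto simp: B_def indicator_def binomial_eq_0)
    finally show ?thesis using s by (simp add: null_sets_def)
  qed
  have "{\<omega> \<in> space M. \<not> R a b t \<omega> \<le> F a b t \<omega>} \<subseteq> (\<Union>m. B m \<inter> {\<omega> \<in> space M. R a b t \<omega> = m})"
    by (auto simp: B_def)
  then show ?thesis by (intro AE_I'[OF null_sets_UN]) (use N in auto)
qed

lemma nn_nat_decomp:
  assumes "X \<in> M \<rightarrow>\<^sub>M count_space UNIV"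
  shows "(\<integral>\<^sup>+\<omega>. ennreal (real (X \<omega>)) \<partial>M) =
     (\<integral>\<^sup>+m. ennreal (real m) * emeasure M {\<omega> \<in> space M. X \<omega> = m} \<partial>count_space UNIV)"
proof -
  have sX: "{\<omega> \<in> space M. X \<omega> = m} \<in> sets M" for m
  proof -
    have "{\<omega> \<in> space M. X \<omega> = m} = X -` {m} \<inter> space M" by auto
    also have "\<dots> \<in> sets M" by (rule measurable_sets[OF assms]) simp
    finally show ?thesis .
  qed
  have "(\<integral>\<^sup>+\<omega>. ennreal (real (X \<omega>)) \<partial>M) =
     (\<integral>\<^sup>+\<omega>. (\<integral>\<^sup>+m. ennreal (real m) * indicator {\<omega> \<in> space M. X \<omega> = m} \<omega> \<partial>count_space UNIV) \<partial>M)"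
  proof (intro nn_integral_cong)
    fix \<omega> assume w: "\<omega> \<in> space M"
    have "(\<integral>\<^sup>+m. ennreal (real m) * indicator {\<omega> \<in> space M. X \<omega> = m} \<omega> \<partial>count_space UNIV) =
          (\<Sum>m\<in>{X \<omega>}. ennreal (real m) * indicator {\<omega> \<in> space M. X \<omega> = m} \<omega>)"
      by (rule nn_integral_count_space') (auto simp: indicator_def)
    also have "\<dots> = ennreal (real (X \<omega>))" using w by (simp add: indicator_def)
    finally show "ennreal (real (X \<omega>)) = (\<integral>\<^sup>+m. ennreal (real m) * indicator {\<omega> \<in> space M. X \<omega> = m} \<omega> \<partial>count_space UNIV)" by simp
  qed
  also have "\<dots> = (\<integral>\<^sup>+m. (\<integral>\<^sup>+\<omega>. ennreal (real m) * indicator {\<omega> \<in> space M. X \<omega> = m} \<omega> \<partial>M) \<partial>count_space UNIV)"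
    by (rule nn_integral_count_space_nn_integral) (use sX in auto)
  also have "\<dots> = (\<integral>\<^sup>+m. ennreal (real m) * emeasure M {\<omega> \<in> space M. X \<omega> = m} \<partial>count_space UNIV)"
    by (intro nn_integral_cong nn_integral_cmult_indicator sX)
  finally show ?thesis .
qed

lemma ER:
  assumes sw: "swaps_ok M K q A R C F" and ab: "(a, b) \<in> Pairs K" and q: "0 \<le> q" "q \<le> 1"
  shows "(\<integral>\<^sup>+\<omega>. ennreal (real (R a b t \<omega>)) \<partial>M) = (\<integral>\<^sup>+\<omega>. ennreal (q * real (F a b t \<omega>)) \<partial>M)"
proof -
  have abK: "a \<in> Kset K" "b \<in> Kset K" using Pairs_Kset[OF ab] by auto
  have mF: "F a b t \<in> M \<rightarrow>\<^sub>M count_space UNIV" and mR: "R a b t \<in> M \<rightarrow>\<^sub>M count_space UNIV"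
    using sw abK unfolding swaps_ok_def by blast+
  have sp: "space M \<in> hist_dec_sets M K A R C F t"
    unfolding hist_dec_sets_def gen_sets_def by (rule sigma_sets_top)
  have mP: "(\<lambda>\<omega>. ennreal (pmf (binomial_pmf (F a b t \<omega>) q) m)) \<in> borel_measurable M" for m
    by (rule measurable_compose[OF mF]) simp
  have "(\<integral>\<^sup>+\<omega>. ennreal (real (R a b t \<omega>)) \<partial>M) =
     (\<integral>\<^sup>+m. ennreal (real m) * emeasure M {\<omega> \<in> space M. R a b t \<omega> = m} \<partial>count_space UNIV)"
    by (rule nn_nat_decomp[OF mR])
  also have "\<dots> = (\<integral>\<^sup>+m. ennreal (real m) * (\<integral>\<^sup>+\<omega>. ennreal (pmf (binomial_pmf (F a b t \<omega>) q) m) \<partial>M) \<partial>count_space UNIV)"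
  proof (intro nn_integral_cong arg_cong2[where f = "(*)"] refl)
    fix m
    have "emeasure M {\<omega> \<in> space M. R a b t \<omega> = m} = emeasure M (space M \<inter> {\<omega> \<in> space M. R a b t \<omega> = m})"
      by (simp add: Int_absorb1)
    also have "\<dots> = (\<integral>\<^sup>+ \<omega>. ennreal (pmf (binomial_pmf (F a b t \<omega>) q) m) * indicator (space M) \<omega> \<partial>M)"
      by (rule marginal[OF sw ab sp sets.top])
    also have "\<dots> = (\<integral>\<^sup>+\<omega>. ennreal (pmf (binomial_pmf (F a b t \<omega>) q) m) \<partial>M)"
      by (intro nn_integral_cong) simp
    finally show "emeasure M {\<omega> \<in> space M. R a b t \<omega> = m} = (\<integral>\<^sup>+\<omega>. ennreal (pmf (binomial_pmf (F a b t \<omega>) q) m) \<partial>M)" .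
  qed
  also have "\<dots> = (\<integral>\<^sup>+m. (\<integral>\<^sup>+\<omega>. ennreal (real m) * ennreal (pmf (binomial_pmf (F a b t \<omega>) q) m) \<partial>M) \<partial>count_space UNIV)"
    by (intro nn_integral_cong nn_integral_cmult[symmetric] mP)
  also have "\<dots> = (\<integral>\<^sup>+\<omega>. (\<integral>\<^sup>+m. ennreal (real m) * ennreal (pmf (binomial_pmf (F a b t \<omega>) q) m) \<partial>count_space UNIV) \<partial>M)"
    by (rule nn_integral_count_space_nn_integral[symmetric]) (use mP in auto)
  also have "\<dots> = (\<integral>\<^sup>+\<omega>. ennreal (q * real (F a b t \<omega>)) \<partial>M)"
  proof (intro nn_integral_cong)
    fix \<omega>
    have "(\<integral>\<^sup>+m. ennreal (real m) * ennreal (pmf (binomial_pmf (F a b t \<omega>) q) m) \<partial>count_space UNIV) =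
          (\<integral>\<^sup>+m. ennreal (real m) \<partial>measure_pmf (binomial_pmf (F a b t \<omega>) q))"
      by (simp add: nn_integral_measure_pmf mult.commute)
    also have "\<dots> = ennreal (q * real (F a b t \<omega>))"
      by (simp add: binom_mean[OF q] mult.commute)
    finally show "(\<integral>\<^sup>+m. ennreal (real m) * ennreal (pmf (binomial_pmf (F a b t \<omega>) q) m) \<partial>count_space UNIV) =
          ennreal (q * real (F a b t \<omega>))" .
  qed
  finally show ?thesis .
qed

lemma finite_Kset[simp]: "finite (Kset K)" by (simp add: Kset_def)

lemma intA:
  assumes ps: "prob_space M" and ar: "arrivals_ok M K lam Amax A R C"
    and ij: "i \<in> Kset K" "j \<in> Kset K"
  shows "integrable M (\<lambda>\<omega>. real (A i j t \<omega>))"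
proof -
  interpret prob_space M by (rule ps)
  have mA: "A i j t \<in> M \<rightarrow>\<^sub>M count_space UNIV"
    using ar ij unfolding arrivals_ok_def stationary_ergodic_def by blast
  have sp: "space M \<in> hist_sets M K A R C t"
    unfolding hist_sets_def gen_sets_def by (rule sigma_sets_top)
  have b: "(\<integral>\<^sup>+ \<omega>\<in>space M. ennreal ((real (A i j t \<omega>))\<^sup>2) \<partial>M) \<le> ennreal (Amax\<^sup>2) * emeasure M (space M)"
    using ar ij sp unfolding arrivals_ok_def by blast
  have "(\<integral>\<^sup>+ \<omega>. ennreal ((real (A i j t \<omega>))\<^sup>2) \<partial>M) = (\<integral>\<^sup>+ \<omega>\<in>space M. ennreal ((real (A i j t \<omega>))\<^sup>2) \<partial>M)"
    by (intro nn_integral_cong) simp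
  also have "\<dots> \<le> ennreal (Amax\<^sup>2)" using b by (simp add: emeasure_space_1)
  finally have b2: "(\<integral>\<^sup>+ \<omega>. ennreal ((real (A i j t \<omega>))\<^sup>2) \<partial>M) \<le> ennreal (Amax\<^sup>2)" .
  have "(\<integral>\<^sup>+ \<omega>. ennreal (real (A i j t \<omega>)) \<partial>M) \<le> (\<integral>\<^sup>+ \<omega>. ennreal 1 + ennreal ((real (A i j t \<omega>))\<^sup>2) \<partial>M)"
  proof (intro nn_integral_mono)
    fix \<omega>
    have "real (A i j t \<omega>) \<le> 1 + (real (A i j t \<omega>))\<^sup>2"
    proof -
      define x where "x = real (A i j t \<omega>)"
      have x0: "0 \<le> x" by (simp add: x_def)
      have "0 \<le> (x - 1)\<^sup>2" by simp
      moreover have "(x - 1)\<^sup>2 = x\<^sup>2 - 2 * x + 1" by (simp add: power2_eq_square algebra_simps)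
      ultimately have "x \<le> 1 + x\<^sup>2" using x0 by linarith
      then show ?thesis by (simp add: x_def)
    qed
    then have "ennreal (real (A i j t \<omega>)) \<le> ennreal (1 + (real (A i j t \<omega>))\<^sup>2)"
      by (rule ennreal_leI)
    moreover have "ennreal (1 + (real (A i j t \<omega>))\<^sup>2) = ennreal 1 + ennreal ((real (A i j t \<omega>))\<^sup>2)"
      by (rule ennreal_plus) auto
    ultimately show "ennreal (real (A i j t \<omega>)) \<le> ennreal 1 + ennreal ((real (A i j t \<omega>))\<^sup>2)"
      by simp
  qed
  also have "\<dots> = ennreal 1 * emeasure M (space M) + (\<integral>\<^sup>+ \<omega>. ennreal ((real (A i j t \<omega>))\<^sup>2) \<partial>M)"
    by (subst nn_integral_add) (auto intro!: meas_real mA measurable_compose[OF meas_real[OF mA]])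
  also have "\<dots> < \<infinity>" using b2 by (simp add: emeasure_space_1 ennreal_plus[symmetric] del: ennreal_plus)
      (metis ennreal_add_eq_top ennreal_one_neq_top infinity_ennreal_def le_less_trans less_top not_le top.extremum_uniqueI ennreal_less_top)
  finally show ?thesis
    by (intro integrableI_nonneg meas_real mA) auto
qed

lemma EA:
  assumes ps: "prob_space M" and ar: "arrivals_ok M K lam Amax A R C"
    and ij: "i \<in> Kset K" "j \<in> Kset K"
  shows "integral\<^sup>L M (\<lambda>\<omega>. real (A i j t \<omega>)) = lam i j"
proof -
  have se: "stationary_ergodic M (A i j)" and l: "lam i j = integral\<^sup>L M (\<lambda>\<omega>. real (A i j 0 \<omega>))"
    using ar ij unfolding arrivals_ok_def by blast+
  have mA: "\<And>t. A i j t \<in> M \<rightarrow>\<^sub>M count_space UNIV" and d: "distr M seqM (\<lambda>\<omega> t'. A i j (t' + t) \<omega>) = distr M seqM (\<lambda>\<omega> t'. A i j t' \<omega>)"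
    using se unfolding stationary_ergodic_def by blast+
  have m1: "(\<lambda>\<omega> t'. A i j (t' + s) \<omega>) \<in> M \<rightarrow>\<^sub>M seqM" for s
    by (rule measurable_PiM_single') (auto intro: mA)
  have m2: "(\<lambda>x :: nat \<Rightarrow> nat. real (x 0)) \<in> borel_measurable seqM"
    by (rule measurable_compose[OF measurable_component_singleton[of 0]]) simp_all
  have "integral\<^sup>L M (\<lambda>\<omega>. real (A i j t \<omega>)) = integral\<^sup>L (distr M seqM (\<lambda>\<omega> t'. A i j (t' + t) \<omega>)) (\<lambda>x. real (x 0))"
    by (subst integral_distr[OF m1 m2]) simp
  also have "\<dots> = integral\<^sup>L (distr M seqM (\<lambda>\<omega> t'. A i j (t' + 0) \<omega>)) (\<lambda>x. real (x 0))"
    by (simp add: d)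
  also have "\<dots> = lam i j"
    by (subst integral_distr[OF m1 m2]) (simp add: l)
  finally show ?thesis .
qed

lemma pair_facts:
  assumes sw: "swaps_ok M K q A R C F" and od: "on_demand M K A R C F"
    and ij: "i \<in> Kset K" "j \<in> Kset K" and q: "0 \<le> q" "q \<le> 1"
  shows "(AE \<omega> in M. R i j t \<omega> \<le> F i j t \<omega>) \<and>
    (\<integral>\<^sup>+\<omega>. ennreal (real (R i j t \<omega>)) \<partial>M) = (\<integral>\<^sup>+\<omega>. ennreal (q * real (F i j t \<omega>)) \<partial>M)"
proof (cases "i \<le> j")
  case True
  then have "(i, j) \<in> Pairs K" using ij by (auto simp: Pairs_def Kset_def)
  then show ?thesis using R_le_F_AE[OF sw _ q] ER[OF sw _ q] by blast
next
  case False
  then have p: "(j, i) \<in> Pairs K" using ij by (auto simp: Pairs_def Kset_def)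
  have rs: "R i j t = R j i t" using sw ij unfolding swaps_ok_def by blast
  have fs: "\<And>\<omega>. \<omega> \<in> space M \<Longrightarrow> F i j t \<omega> = F j i t \<omega>" using od ij unfolding on_demand_def by blast
  have "AE \<omega> in M. R i j t \<omega> \<le> F i j t \<omega>"
    using AE_space R_le_F_AE[OF sw p q, of t] by eventually_elim (use rs fs in auto)
  moreover have "(\<integral>\<^sup>+\<omega>. ennreal (real (R i j t \<omega>)) \<partial>M) = (\<integral>\<^sup>+\<omega>. ennreal (q * real (F i j t \<omega>)) \<partial>M)"
    using ER[OF sw p q, of t] rs fs by (simp cong: nn_integral_cong)
  ultimately show ?thesis by blast
qed

lemma FU_on_S:
  assumes od: "on_demand M K A R C F"
    and symU: "\<And>a b. a \<in> Kset K \<Longrightarrow> b \<in> Kset K \<Longrightarrow> Uq A R a b t \<omega> = Uq A R b a t \<omega>"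
    and w: "\<omega> \<in> space M" "\<omega> \<in> S_event M K A R C F t"
    and ij: "i \<in> Kset K" "j \<in> Kset K"
  shows "F i j t \<omega> = Uq A R i j t \<omega>"
proof (rule ccontr)
  assume ne: "F i j t \<omega> \<noteq> Uq A R i j t \<omega>"
  have le: "\<And>a b. a \<in> Kset K \<Longrightarrow> b \<in> Kset K \<Longrightarrow> F a b t \<omega> \<le> Uq A R a b t \<omega>"
    using od w(1) unfolding on_demand_def by blast
  have lt: "F i j t \<omega> < Uq A R i j t \<omega>" using le[OF ij] ne by simp
  have S: "\<And>b. b \<in> Kset K \<Longrightarrow> (\<Sum>a\<in>Kset K. Uq A R a b t \<omega>) \<le> E0q K C F b t \<omega>"
    using w(2) unfolding S_event_def by blast
  have prod: "(int (E0q K C F i t \<omega>) - (\<Sum>k\<in>Kset K. int (F i k t \<omega>))) *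
           (int (E0q K C F j t \<omega>) - (\<Sum>k\<in>Kset K. int (F k j t \<omega>))) *
           (int (Uq A R i j t \<omega>) - int (F i j t \<omega>)) = 0"
    using od w(1) ij unfolding on_demand_def by blast
  have row: "(\<Sum>k\<in>Kset K. F i k t \<omega>) < (\<Sum>k\<in>Kset K. Uq A R i k t \<omega>)"
    by (rule sum_strict_mono_ex1) (use le ij lt in auto)
  have row2: "(\<Sum>k\<in>Kset K. Uq A R i k t \<omega>) = (\<Sum>k\<in>Kset K. Uq A R k i t \<omega>)"
    by (rule sum.cong) (use symU ij in auto)
  have col: "(\<Sum>k\<in>Kset K. F k j t \<omega>) < (\<Sum>k\<in>Kset K. Uq A R k j t \<omega>)"
    by (rule sum_strict_mono_ex1) (use le ij lt in auto)
  have c1: "int (E0q K C F i t \<omega>) - (\<Sum>k\<in>Kset K. int (F i k t \<omega>)) \<noteq> 0"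
    using row row2 S[OF ij(1)] by (simp add: of_nat_sum[symmetric] del: of_nat_sum)
  have c2: "int (E0q K C F j t \<omega>) - (\<Sum>k\<in>Kset K. int (F k j t \<omega>)) \<noteq> 0"
    using col S[OF ij(2)] by (simp add: of_nat_sum[symmetric] del: of_nat_sum)
  have c3: "int (Uq A R i j t \<omega>) - int (F i j t \<omega>) \<noteq> 0" using lt by simp
  show False using prod c1 c2 c3 by simp
qed

lemma S_sets:
  assumes mU: "\<And>a b. a \<in> Kset K \<Longrightarrow> b \<in> Kset K \<Longrightarrow> Uq A R a b t \<in> M \<rightarrow>\<^sub>M count_space UNIV"
    and mE: "\<And>b. b \<in> Kset K \<Longrightarrow> E0q K C F b t \<in> M \<rightarrow>\<^sub>M count_space UNIV"
  shows "S_event M K A R C F t \<in> sets M"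
proof -
  define f where "f b \<omega> = (if (\<Sum>a\<in>Kset K. Uq A R a b t \<omega>) \<le> E0q K C F b t \<omega> then (1::nat) else 0)" for b \<omega>
  have mf: "f b \<in> M \<rightarrow>\<^sub>M count_space UNIV" if "b \<in> Kset K" for b
    unfolding f_def by (rule meas2[OF meas_sum mE]) (use mU that in auto)
  have "S_event M K A R C F t = space M - (\<Union>b\<in>Kset K. space M - (f b -` {1} \<inter> space M))"
    by (auto simp: S_event_def f_def split: if_splits)
  also have "\<dots> \<in> sets M"
    by (intro sets.Diff sets.top sets.finite_UN finite_Kset measurable_sets[OF mf]) auto
  finally show ?thesis .
qed

theorem lemma5:
  fixes M :: "'a measure" and K :: nat and p :: "nat \<Rightarrow> real" and q :: real
    and lam :: "nat \<Rightarrow> nat \<Rightarrow> real" and Amax \<epsilon> c2 :: real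
    and A R F :: "nat \<Rightarrow> nat \<Rightarrow> nat \<Rightarrow> 'a \<Rightarrow> nat" and C :: "nat \<Rightarrow> nat \<Rightarrow> 'a \<Rightarrow> nat"
    and t0 :: nat
  assumes "prob_space M"
    and "0 < q" and "q \<le> 1"
    and "generation_ok M K p C"
    and "arrivals_ok M K lam Amax A R C"
    and "swaps_ok M K q A R C F"
    and "on_demand M K A R C F"
    and "\<epsilon> > 0" and "capacity_region K p q (\<lambda>i j. lam i j + \<epsilon>)"
    and "assumption1 M K lam A"
    and "\<forall>t\<ge>1. \<forall>i\<in>Kset K. \<forall>j\<in>Kset K.
           integral\<^sup>L M (\<lambda>\<omega>. (\<Sum>\<tau><t. real (A i j \<tau> \<omega>)) *
             indicator (space M - S_event M K A R C F t) \<omega>) \<le> c2"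
  shows "drift1 M K A R t0 \<le>
    (\<Sum>i\<in>Kset K. \<Sum>j\<in>Kset K.
       lam i j + q * c2 - q * integral\<^sup>L M (\<lambda>\<omega>. real (Uq A R i j t0 \<omega>)))"
proof -
  note ps = assms(1) and gen = assms(4) and ar = assms(5) and sw = assms(6) and od = assms(7)
    and hc2 = assms(11)
  interpret prob_space M by (rule ps)
  have q0: "0 \<le> q" "q \<le> 1" using assms(2,3) by auto
  define KK where "KK = Kset K"
  have mA: "\<And>i j t. i \<in> KK \<Longrightarrow> j \<in> KK \<Longrightarrow> A i j t \<in> M \<rightarrow>\<^sub>M count_space UNIV"
    using ar unfolding arrivals_ok_def stationary_ergodic_def KK_def by blast
  have mR: "\<And>i j t. i \<in> KK \<Longrightarrow> j \<in> KK \<Longrightarrow> R i j t \<in> M \<rightarrow>\<^sub>M count_space UNIV"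
    and mF: "\<And>i j t. i \<in> KK \<Longrightarrow> j \<in> KK \<Longrightarrow> F i j t \<in> M \<rightarrow>\<^sub>M count_space UNIV"
    using sw unfolding swaps_ok_def KK_def by blast+
  have mC: "\<And>i t. i \<in> KK \<Longrightarrow> C i t \<in> M \<rightarrow>\<^sub>M count_space UNIV"
    using gen unfolding generation_ok_def KK_def by blast
  have symA: "\<And>i j t. i \<in> KK \<Longrightarrow> j \<in> KK \<Longrightarrow> A i j t = A j i t"
    using ar unfolding arrivals_ok_def KK_def by blast
  have symR: "\<And>i j t. i \<in> KK \<Longrightarrow> j \<in> KK \<Longrightarrow> R i j t = R j i t"
    using sw unfolding swaps_ok_def KK_def by blast
  have mU: "\<And>i j t. i \<in> KK \<Longrightarrow> j \<in> KK \<Longrightarrow> Uq A R i j t \<in> M \<rightarrow>\<^sub>M count_space UNIV"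
    by (rule conjunct1[OF meas_Uq[OF mA mR]])
  have symU: "\<And>i j t \<omega>. i \<in> KK \<Longrightarrow> j \<in> KK \<Longrightarrow> Uq A R i j t \<omega> = Uq A R j i t \<omega>"
  proof -
    fix i j t \<omega> assume ij: "i \<in> KK" "j \<in> KK"
    show "Uq A R i j t \<omega> = Uq A R j i t \<omega>"
      by (rule conjunct1[OF UE_sym]) (simp_all add: symA[OF ij] symR[OF ij])
  qed
  have FleU: "\<And>i j t \<omega>. \<omega> \<in> space M \<Longrightarrow> i \<in> KK \<Longrightarrow> j \<in> KK \<Longrightarrow> F i j t \<omega> \<le> Uq A R i j t \<omega>"
    using od unfolding on_demand_def KK_def by blast
  have iA: "\<And>i j t. i \<in> KK \<Longrightarrow> j \<in> KK \<Longrightarrow> integrable M (\<lambda>\<omega>. real (A i j t \<omega>))"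
    using intA[OF ps ar] unfolding KK_def by blast
  have iSA: "\<And>i j t. i \<in> KK \<Longrightarrow> j \<in> KK \<Longrightarrow> integrable M (\<lambda>\<omega>. \<Sum>\<tau><t. real (A i j \<tau> \<omega>))"
    using iA by (simp add: integrable_sum)
  have iU: "\<And>i j t. i \<in> KK \<Longrightarrow> j \<in> KK \<Longrightarrow> integrable M (\<lambda>\<omega>. real (Uq A R i j t \<omega>))"
  proof -
    fix i j t assume ij: "i \<in> KK" "j \<in> KK"
    show "integrable M (\<lambda>\<omega>. real (Uq A R i j t \<omega>))"
    proof (rule Bochner_Integration.integrable_bound[OF iSA[OF ij, of t] meas_real[OF mU[OF ij]]])
      show "AE \<omega> in M. norm (real (Uq A R i j t \<omega>)) \<le> norm (\<Sum>\<tau><t. real (A i j \<tau> \<omega>))"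
        using Uq_le_sum[of A R i j t] by (auto simp: of_nat_sum[symmetric] simp del: of_nat_sum)
    qed
  qed
  have iF: "\<And>i j t. i \<in> KK \<Longrightarrow> j \<in> KK \<Longrightarrow> integrable M (\<lambda>\<omega>. real (F i j t \<omega>))"
  proof -
    fix i j t assume ij: "i \<in> KK" "j \<in> KK"
    show "integrable M (\<lambda>\<omega>. real (F i j t \<omega>))"
      by (rule Bochner_Integration.integrable_bound[OF iU[OF ij, of t] meas_real[OF mF[OF ij]]])
         (use FleU ij in auto)
  qed
  have c2nn: "0 \<le> c2" if ne: "KK \<noteq> {}"
  proof -
    obtain i where i: "i \<in> KK" using ne by blast
    have "0 \<le> integral\<^sup>L M (\<lambda>\<omega>. (\<Sum>\<tau><1. real (A i i \<tau> \<omega>)) *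
             indicator (space M - S_event M K A R C F 1) \<omega>)"
      by (rule Bochner_Integration.integral_nonneg) (simp add: sum_nonneg)
    also have "\<dots> \<le> c2" using hc2 i unfolding KK_def by auto
    finally show ?thesis .
  qed
  have main: "integral\<^sup>L M (\<lambda>\<omega>. real (Uq A R i j (Suc t0) \<omega>) - real (Uq A R i j t0 \<omega>)) \<le>
      lam i j + q * c2 - q * integral\<^sup>L M (\<lambda>\<omega>. real (Uq A R i j t0 \<omega>))"
    if ij: "i \<in> KK" "j \<in> KK" for i j
  proof -
    have pf: "(AE \<omega> in M. R i j t0 \<omega> \<le> F i j t0 \<omega>) \<and>
      (\<integral>\<^sup>+\<omega>. ennreal (real (R i j t0 \<omega>)) \<partial>M) = (\<integral>\<^sup>+\<omega>. ennreal (q * real (F i j t0 \<omega>)) \<partial>M)"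
      by (rule pair_facts[OF sw od _ _ q0]) (use ij in \<open>auto simp: KK_def\<close>)
    have iR: "integrable M (\<lambda>\<omega>. real (R i j t0 \<omega>))"
      by (rule Bochner_Integration.integrable_bound[OF iF[OF ij, of t0] meas_real[OF mR[OF ij]]])
         (use conjunct1[OF pf] in \<open>rule eventually_mono, simp\<close>)
    have ER: "integral\<^sup>L M (\<lambda>\<omega>. real (R i j t0 \<omega>)) = q * integral\<^sup>L M (\<lambda>\<omega>. real (F i j t0 \<omega>))"
    proof -
      have "ennreal (integral\<^sup>L M (\<lambda>\<omega>. real (R i j t0 \<omega>))) = (\<integral>\<^sup>+\<omega>. ennreal (real (R i j t0 \<omega>)) \<partial>M)"
        by (rule nn_integral_eq_integral[OF iR, symmetric]) auto
      also have "\<dots> = (\<integral>\<^sup>+\<omega>. ennreal (q * real (F i j t0 \<omega>)) \<partial>M)" using pf by blast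
      also have "\<dots> = ennreal (integral\<^sup>L M (\<lambda>\<omega>. q * real (F i j t0 \<omega>)))"
        by (rule nn_integral_eq_integral) (use iF[OF ij] q0 in auto)
      finally have "integral\<^sup>L M (\<lambda>\<omega>. real (R i j t0 \<omega>)) = integral\<^sup>L M (\<lambda>\<omega>. q * real (F i j t0 \<omega>))"
        by (subst (asm) ennreal_inj) (auto intro!: integral_nonneg simp: q0)
      then show ?thesis by simp
    qed
    have step: "integral\<^sup>L M (\<lambda>\<omega>. real (Uq A R i j (Suc t0) \<omega>) - real (Uq A R i j t0 \<omega>)) \<le>
        integral\<^sup>L M (\<lambda>\<omega>. real (A i j t0 \<omega>) - real (R i j t0 \<omega>))"
    proof (rule integral_mono_AE)
      show "integrable M (\<lambda>\<omega>. real (Uq A R i j (Suc t0) \<omega>) - real (Uq A R i j t0 \<omega>))"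
        by (intro Bochner_Integration.integrable_diff iU[OF ij])
      show "integrable M (\<lambda>\<omega>. real (A i j t0 \<omega>) - real (R i j t0 \<omega>))"
        by (intro Bochner_Integration.integrable_diff iA[OF ij] iR)
      show "AE \<omega> in M. real (Uq A R i j (Suc t0) \<omega>) - real (Uq A R i j t0 \<omega>) \<le> real (A i j t0 \<omega>) - real (R i j t0 \<omega>)"
        using AE_space conjunct1[OF pf]
      proof eventually_elim
        case (elim \<omega>)
        have "R i j t0 \<omega> \<le> Uq A R i j t0 \<omega>" using elim FleU[OF elim(1) ij, of t0] by linarith
        then show ?case by (simp add: Uq_Suc)
      qed
    qed
    have EA': "integral\<^sup>L M (\<lambda>\<omega>. real (A i j t0 \<omega>)) = lam i j"
      using EA[OF ps ar] ij unfolding KK_def by blast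
    have gap: "integral\<^sup>L M (\<lambda>\<omega>. real (Uq A R i j t0 \<omega>)) - integral\<^sup>L M (\<lambda>\<omega>. real (F i j t0 \<omega>)) \<le> c2"
    proof (cases "t0 = 0")
      case True
      have "\<And>\<omega>. \<omega> \<in> space M \<Longrightarrow> F i j t0 \<omega> = 0" using FleU[OF _ ij, of _ t0] True by fastforce
      then have "integral\<^sup>L M (\<lambda>\<omega>. real (F i j t0 \<omega>)) = 0" by (simp cong: Bochner_Integration.integral_cong)
      then show ?thesis using True c2nn ij by auto
    next
      case False
      define S where "S = S_event M K A R C F t0"
      have Ss: "S \<in> sets M" unfolding S_def
      proof (rule S_sets)
        show "\<And>a b. a \<in> Kset K \<Longrightarrow> b \<in> Kset K \<Longrightarrow> Uq A R a b t0 \<in> M \<rightarrow>\<^sub>M count_space UNIV"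
          using mU unfolding KK_def by blast
        show "\<And>b. b \<in> Kset K \<Longrightarrow> E0q K C F b t0 \<in> M \<rightarrow>\<^sub>M count_space UNIV"
          by (rule meas_E0q) (use mC mF in \<open>auto simp: KK_def\<close>)
      qed
      have "integral\<^sup>L M (\<lambda>\<omega>. real (Uq A R i j t0 \<omega>)) - integral\<^sup>L M (\<lambda>\<omega>. real (F i j t0 \<omega>)) =
            integral\<^sup>L M (\<lambda>\<omega>. real (Uq A R i j t0 \<omega>) - real (F i j t0 \<omega>))"
        using iU[OF ij] iF[OF ij] by simp
      also have "\<dots> \<le> integral\<^sup>L M (\<lambda>\<omega>. (\<Sum>\<tau><t0. real (A i j \<tau> \<omega>)) * indicator (space M - S) \<omega>)"
      proof (rule integral_mono)
        show "integrable M (\<lambda>\<omega>. real (Uq A R i j t0 \<omega>) - real (F i j t0 \<omega>))"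
          by (intro Bochner_Integration.integrable_diff iU[OF ij] iF[OF ij])
        show "integrable M (\<lambda>\<omega>. (\<Sum>\<tau><t0. real (A i j \<tau> \<omega>)) * indicator (space M - S) \<omega>)"
          by (rule integrable_real_mult_indicator) (use Ss iSA[OF ij] in auto)
        fix \<omega> assume w: "\<omega> \<in> space M"
        show "real (Uq A R i j t0 \<omega>) - real (F i j t0 \<omega>) \<le> (\<Sum>\<tau><t0. real (A i j \<tau> \<omega>)) * indicator (space M - S) \<omega>"
        proof (cases "\<omega> \<in> S")
          case True
          have "F i j t0 \<omega> = Uq A R i j t0 \<omega>"
            by (rule FU_on_S[OF od _ w]) (use True symU ij in \<open>auto simp: S_def KK_def\<close>)
          then show ?thesis by (simp add: sum_nonneg)
        next
          case False
          have "real (Uq A R i j t0 \<omega>) \<le> (\<Sum>\<tau><t0. real (A i j \<tau> \<omega>))"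
            using Uq_le_sum[of A R i j t0 \<omega>] by (simp add: of_nat_sum[symmetric] del: of_nat_sum)
          then show ?thesis using False w by simp
        qed
      qed
      also have "\<dots> \<le> c2" using hc2 False ij unfolding S_def KK_def by auto
      finally show ?thesis .
    qed
    have "integral\<^sup>L M (\<lambda>\<omega>. real (A i j t0 \<omega>) - real (R i j t0 \<omega>)) =
          lam i j - q * integral\<^sup>L M (\<lambda>\<omega>. real (F i j t0 \<omega>))"
      using iA[OF ij] iR EA' ER by simp
    also have "\<dots> \<le> lam i j + q * c2 - q * integral\<^sup>L M (\<lambda>\<omega>. real (Uq A R i j t0 \<omega>))"
      using mult_left_mono[OF gap q0(1)] by (simp add: algebra_simps)
    finally show ?thesis using step by linarith
  qed
  have "drift1 M K A R t0 = integral\<^sup>L M (\<lambda>\<omega>. \<Sum>i\<in>KK. \<Sum>j\<in>KK. real (Uq A R i j (Suc t0) \<omega>) - real (Uq A R i j t0 \<omega>))"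
    unfolding drift1_def L_od_def KK_def by (simp add: sum_subtractf)
  also have "\<dots> = (\<Sum>i\<in>KK. \<Sum>j\<in>KK. integral\<^sup>L M (\<lambda>\<omega>. real (Uq A R i j (Suc t0) \<omega>) - real (Uq A R i j t0 \<omega>)))"
    using iU by (simp add: integral_sum integrable_sum)
  also have "\<dots> \<le> (\<Sum>i\<in>KK. \<Sum>j\<in>KK. lam i j + q * c2 - q * integral\<^sup>L M (\<lambda>\<omega>. real (Uq A R i j t0 \<omega>)))"
    by (intro sum_mono main)
  finally show ?thesis unfolding KK_def .
qed

end
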